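(* Let $\eta=10^{-4}$. There exist absolute constants $c_0,c_1,c_2>0$ such that the following holds for all integers $K\ge1$ and all $\epsilon$ with $c_0/K\le\epsilon\le c_1$. Let $n=2K$, and let $\mathcal F$ be the family of instances with $n$ arms in which every arm is a Bernoulli arm with mean in $\{1/2-\eta,\,1/2+\eta\}$. If an algorithm, on every instance in $\mathcal F$, outputs an $\epsilon$-top-$K$ set of arms with probability at least $0.9$, then there is an instance in $\mathcal F$ on which the expected number of pulls made by the algorithm is at least $c_2\, n\log(1/\epsilon)$.
   Context: Stochastic bandit model: arm $i$ has an unknown reward distribution with mean $\theta_i$; an algorithm adaptively pulls arms, each pull of arm $i$ giving an independent sample from its distribution, and finally outputs a set of arms. With arms indexed so that $\theta_1\ge\dots\ge\theta_n$, for $T\subseteq[n]$ with $|T|=K$ the aggregate regret is $\mathcal R_T=\frac1K(\sum_{i=1}^K\theta_i-\sum_{i\in T}\theta_i)$, and $T$ is an $\epsilon$-top-$K$ set if $|T|=K$ and $\mathcal R_T\le\epsilon$. *)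

theory Defs
  imports "HOL-Probability.Probability"
begin

text \<open>Arms are indexed 0..n-1. An instance is given by the vector of means theta.
  An (adaptive, possibly randomized) algorithm maps the history of pulls so far
  (list of (arm, observed reward)) to a distribution over its next action:
  pull an arm, or stop and output a set of arms.\<close>

datatype action = Pull nat | Stop "nat set"

type_synonym algorithm = "(nat \<times> bool) list \<Rightarrow> action pmf"

definition top_sum :: "(nat \<Rightarrow> real) \<Rightarrow> nat \<Rightarrow> nat \<Rightarrow> real" where
  "top_sum \<theta> n K = sum_list (take K (rev (sort (map \<theta> [0..<n]))))"

definition regret :: "(nat \<Rightarrow> real) \<Rightarrow> nat \<Rightarrow> nat \<Rightarrow> nat set \<Rightarrow> real" where
  "regret \<theta> n K T = (top_sum \<theta> n K - sum \<theta> T) / real K"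

definition eps_top_K :: "(nat \<Rightarrow> real) \<Rightarrow> nat \<Rightarrow> nat \<Rightarrow> real \<Rightarrow> nat set \<Rightarrow> bool" where
  "eps_top_K \<theta> n K \<epsilon> T \<longleftrightarrow> T \<subseteq> {..<n} \<and> card T = K \<and> regret \<theta> n K T \<le> \<epsilon>"

text \<open>stop_prob theta A G t h: probability that, starting from history h, the algorithm
  stops within its next t decisions (i.e. after at most t-1 further pulls) with an
  output satisfying G.\<close>
fun stop_prob :: "(nat \<Rightarrow> real) \<Rightarrow> algorithm \<Rightarrow> (nat set \<Rightarrow> bool) \<Rightarrow> nat
                   \<Rightarrow> (nat \<times> bool) list \<Rightarrow> real" where
  "stop_prob \<theta> A G 0 h = 0"
| "stop_prob \<theta> A G (Suc t) h =
     measure_pmf.expectation (A h)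
       (\<lambda>a. case a of
              Stop S \<Rightarrow> (if G S then 1 else 0)
            | Pull i \<Rightarrow> measure_pmf.expectation (bernoulli_pmf (\<theta> i))
                          (\<lambda>r. stop_prob \<theta> A G t (h @ [(i, r)])))"

definition success_prob :: "(nat \<Rightarrow> real) \<Rightarrow> algorithm \<Rightarrow> (nat set \<Rightarrow> bool) \<Rightarrow> ennreal" where
  "success_prob \<theta> A G = (SUP t. ennreal (stop_prob \<theta> A G t []))"

text \<open>Expected number of pulls N (N = infinity if the algorithm never stops):
  E[N] = sum over t of P(N > t), and P(N \<le> t) = stop_prob with t+1 decisions.\<close>
definition expected_pulls :: "(nat \<Rightarrow> real) \<Rightarrow> algorithm \<Rightarrow> ennreal" where
  "expected_pulls \<theta> A = (\<Sum>t. ennreal (1 - stop_prob \<theta> A (\<lambda>_. True) (Suc t) []))"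

definition eta :: real where "eta = 10 powr (-4)"

text \<open>The family F: n Bernoulli arms with means in {1/2 - eta, 1/2 + eta};
  indices \<ge> n are not arms (their value is normalised to 0).\<close>
definition family :: "nat \<Rightarrow> (nat \<Rightarrow> real) set" where
  "family n = {\<theta>. (\<forall>i<n. \<theta> i \<in> {1/2 - eta, 1/2 + eta}) \<and> (\<forall>i\<ge>n. \<theta> i = 0)}"

end

theory Submission
  imports Defs
begin



definition stepF where
 "stepF \<theta> A G t h a = (case a of Stop S \<Rightarrow> (if G S then 1 else 0)
            | Pull i \<Rightarrow> measure_pmf.expectation (bernoulli_pmf (\<theta> i))
                          (\<lambda>r. stop_prob \<theta> A G t (h @ [(i, r)])))"

lemma sp_Suc: "stop_prob \<theta> A G (Suc t) h = measure_pmf.expectation (A h) (stepF \<theta> A G t h)"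
  by (simp add: stepF_def[abs_def])

declare stop_prob.simps(2)[simp del]

lemma step_pull: "0 \<le> \<theta> i \<Longrightarrow> \<theta> i \<le> 1 \<Longrightarrow> stepF \<theta> A G t h (Pull i) =
   stop_prob \<theta> A G t (h @ [(i,True)]) * \<theta> i + stop_prob \<theta> A G t (h @ [(i,False)]) * (1 - \<theta> i)"
  by (simp add: stepF_def[abs_def])

lemma step_stop: "stepF \<theta> A G t h (Stop S) = (if G S then 1 else 0)"
  by (simp add: stepF_def[abs_def])

lemma convex_01: "0 \<le> (p::real) \<Longrightarrow> p \<le> 1 \<Longrightarrow> 0 \<le> x \<Longrightarrow> x \<le> 1 \<Longrightarrow> 0 \<le> y \<Longrightarrow> y \<le> 1
   \<Longrightarrow> 0 \<le> x * p + y * (1 - p) \<and> x * p + y * (1 - p) \<le> 1"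
proof -
  assume a: "0 \<le> (p::real)" "p \<le> 1" "0 \<le> x" "x \<le> 1" "0 \<le> y" "y \<le> 1"
  have "x * p + y * (1 - p) \<le> 1 * p + 1 * (1 - p)"
    using a by (intro add_mono mult_right_mono) auto
  then show ?thesis using a by simp
qed

lemma sp_bounds:
  assumes th: "\<And>i. 0 \<le> \<theta> i \<and> \<theta> i \<le> 1"
  shows "0 \<le> stop_prob \<theta> A G t h \<and> stop_prob \<theta> A G t h \<le> 1"
proof (induction t arbitrary: h)
  case 0 then show ?case by simp
next
  case (Suc t)
  have b: "0 \<le> stepF \<theta> A G t h a \<and> stepF \<theta> A G t h a \<le> (1::real)" for a
  proof (cases a)
    case (Pull i)
    have t0: "0 \<le> \<theta> i" "\<theta> i \<le> 1" using th by auto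
    show ?thesis using Pull step_pull[where \<theta>=\<theta> and i=i, OF t0] convex_01[OF t0] Suc by simp
  qed (simp add: stepF_def)
  have "measure_pmf.expectation (A h) (stepF \<theta> A G t h) \<ge> 0"
    using b by (intro integral_nonneg_AE) auto
  moreover have "measure_pmf.expectation (A h) (stepF \<theta> A G t h) \<le> measure_pmf.expectation (A h) (\<lambda>_. 1)"
    using b by (intro integral_mono measure_pmf.integrable_const_bound[where B=1]) auto
  ultimately show ?case by (simp add: sp_Suc)
qed

lemma step_bounds:
  assumes th: "\<And>i. 0 \<le> \<theta> i \<and> \<theta> i \<le> 1"
  shows "0 \<le> stepF \<theta> A G t h a \<and> stepF \<theta> A G t h a \<le> (1::real)"
proof (cases a)
  case (Pull i)
  have t0: "0 \<le> \<theta> i" "\<theta> i \<le> 1" using th by auto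
  show ?thesis using Pull step_pull[where \<theta>=\<theta> and i=i, OF t0] convex_01[OF t0] sp_bounds[OF th] by simp
qed (simp add: stepF_def)

lemma step_int:
  assumes th: "\<And>i. 0 \<le> \<theta> i \<and> \<theta> i \<le> 1"
  shows "integrable (measure_pmf M) (stepF \<theta> A G t h)"
  using step_bounds[OF th] by (intro measure_pmf.integrable_const_bound[where B=1]) auto

lemma sp_mono_G:
  assumes th: "\<And>i. 0 \<le> \<theta> i \<and> \<theta> i \<le> 1" and GG: "\<And>S. G S \<Longrightarrow> G' S"
  shows "stop_prob \<theta> A G t h \<le> stop_prob \<theta> A G' t h"
proof (induction t arbitrary: h)
  case 0 then show ?case by simp
next
  case (Suc t)
  have "stepF \<theta> A G t h a \<le> stepF \<theta> A G' t h a" for a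
  proof (cases a)
    case (Pull i)
    have t0: "0 \<le> \<theta> i" "\<theta> i \<le> 1" using th by auto
    show ?thesis using Pull step_pull[where \<theta>=\<theta> and i=i, OF t0] Suc t0
      by (simp add: add_mono mult_right_mono)
  qed (auto simp add: stepF_def GG)
  then show ?case unfolding sp_Suc by (intro integral_mono step_int th)
qed

lemma sp_tail:
  assumes th: "\<And>i. 0 \<le> \<theta> i \<and> \<theta> i \<le> 1" and GG: "\<And>S. G S \<Longrightarrow> G' S"
  shows "B \<le> t \<Longrightarrow> stop_prob \<theta> A G t h - stop_prob \<theta> A G B h \<le> stop_prob \<theta> A G' t h - stop_prob \<theta> A G' B h"
proof (induction B arbitrary: t h)
  case 0 then show ?case using sp_mono_G[OF th GG] by simp
next
  case (Suc B)
  then obtain t' where t': "t = Suc t'" "B \<le> t'" by (cases t) auto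
  have "stepF \<theta> A G t' h a - stepF \<theta> A G B h a \<le> stepF \<theta> A G' t' h a - stepF \<theta> A G' B h a" for a
  proof (cases a)
    case (Pull i)
    have t0: "0 \<le> \<theta> i" "\<theta> i \<le> 1" using th by auto
    have 1: "stop_prob \<theta> A G t' (h @ [(i,r)]) - stop_prob \<theta> A G B (h @ [(i,r)]) \<le>
             stop_prob \<theta> A G' t' (h @ [(i,r)]) - stop_prob \<theta> A G' B (h @ [(i,r)])" for r
      using Suc.IH t' by blast
    have "(stop_prob \<theta> A G t' (h @ [(i,True)]) - stop_prob \<theta> A G B (h @ [(i,True)])) * \<theta> i
        + (stop_prob \<theta> A G t' (h @ [(i,False)]) - stop_prob \<theta> A G B (h @ [(i,False)])) * (1 - \<theta> i)
       \<le> (stop_prob \<theta> A G' t' (h @ [(i,True)]) - stop_prob \<theta> A G' B (h @ [(i,True)])) * \<theta> i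
        + (stop_prob \<theta> A G' t' (h @ [(i,False)]) - stop_prob \<theta> A G' B (h @ [(i,False)])) * (1 - \<theta> i)"
      using 1 t0 by (intro add_mono mult_right_mono) auto
    then show ?thesis using Pull by (simp add: step_pull t0 algebra_simps)
  qed (auto simp add: stepF_def GG)
  then have "measure_pmf.expectation (A h) (\<lambda>a. stepF \<theta> A G t' h a - stepF \<theta> A G B h a)
     \<le> measure_pmf.expectation (A h) (\<lambda>a. stepF \<theta> A G' t' h a - stepF \<theta> A G' B h a)"
    by (intro integral_mono Bochner_Integration.integrable_diff step_int th)
  then show ?case unfolding t' sp_Suc
    by (simp add: Bochner_Integration.integral_diff step_int th)
qed

lemma sp_mono_t:
  assumes th: "\<And>i. 0 \<le> \<theta> i \<and> \<theta> i \<le> 1"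
  shows "B \<le> t \<Longrightarrow> stop_prob \<theta> A G B h \<le> stop_prob \<theta> A G t h"
proof (induction B arbitrary: t h)
  case 0 then show ?case using sp_bounds[OF th] by simp
next
  case (Suc B)
  then obtain t' where t': "t = Suc t'" "B \<le> t'" by (cases t) auto
  have "stepF \<theta> A G B h a \<le> stepF \<theta> A G t' h a" for a
  proof (cases a)
    case (Pull i)
    have t0: "0 \<le> \<theta> i" "\<theta> i \<le> 1" using th by auto
    show ?thesis using Pull step_pull[where \<theta>=\<theta> and i=i, OF t0] Suc.IH t' t0
      by (simp add: add_mono mult_right_mono)
  qed (auto simp add: stepF_def)
  then show ?case unfolding t' sp_Suc by (intro integral_mono step_int th)
qed




definition wt :: "(nat \<Rightarrow> real) \<Rightarrow> (nat \<times> bool) list \<Rightarrow> real" where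
  "wt \<theta> h = prod_list (map (\<lambda>(i,r). if r then \<theta> i else 1 - \<theta> i) h)"

lemma wt_snoc: "wt \<theta> (h @ [(i,r)]) = wt \<theta> h * (if r then \<theta> i else 1 - \<theta> i)"
  by (simp add: wt_def)

lemma wt_nonneg: "(\<And>i. 0 \<le> \<theta> i \<and> \<theta> i \<le> 1) \<Longrightarrow> 0 \<le> wt \<theta> h"
  unfolding wt_def by (induction h) (auto intro!: mult_nonneg_nonneg)

lemma mix:
  assumes J: "finite J"
    and th: "\<And>j i. 0 \<le> th j i \<and> th j i \<le> 1"
    and w: "\<And>j. 0 \<le> w j"
    and b: "0 \<le> \<beta>"
    and key: "\<And>h S. length h \<le> N \<Longrightarrow>
       (\<Sum>j\<in>J. w j * wt (th j) h * (if Gs j S then 1 else 0)) \<le> \<beta> * (\<Sum>j\<in>J. w j * wt (th j) h)"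
  shows "length h + t \<le> Suc N \<Longrightarrow>
     (\<Sum>j\<in>J. w j * wt (th j) h * stop_prob (th j) A (Gs j) t h) \<le> \<beta> * (\<Sum>j\<in>J. w j * wt (th j) h)"
proof (induction t arbitrary: h)
  case 0
  then show ?case using b w wt_nonneg[OF th] by (simp add: sum_nonneg)
next
  case (Suc t)
  have pt: "(\<Sum>j\<in>J. w j * wt (th j) h * stepF (th j) A (Gs j) t h a) \<le> \<beta> * (\<Sum>j\<in>J. w j * wt (th j) h)" for a
  proof (cases a)
    case (Stop S)
    then show ?thesis using key[of h S] Suc.prems by (simp add: step_stop)
  next
    case (Pull i)
    have t0: "0 \<le> th j i" "th j i \<le> 1" for j using th by auto
    have IT: "(\<Sum>j\<in>J. w j * wt (th j) (h @ [(i,True)]) * stop_prob (th j) A (Gs j) t (h @ [(i,True)]))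
       \<le> \<beta> * (\<Sum>j\<in>J. w j * wt (th j) (h @ [(i,True)]))"
      using Suc.IH Suc.prems by simp
    have IF: "(\<Sum>j\<in>J. w j * wt (th j) (h @ [(i,False)]) * stop_prob (th j) A (Gs j) t (h @ [(i,False)]))
       \<le> \<beta> * (\<Sum>j\<in>J. w j * wt (th j) (h @ [(i,False)]))"
      using Suc.IH Suc.prems by simp
    have "(\<Sum>j\<in>J. w j * wt (th j) h * stepF (th j) A (Gs j) t h a) =
      (\<Sum>j\<in>J. w j * wt (th j) (h @ [(i,True)]) * stop_prob (th j) A (Gs j) t (h @ [(i,True)])) +
      (\<Sum>j\<in>J. w j * wt (th j) (h @ [(i,False)]) * stop_prob (th j) A (Gs j) t (h @ [(i,False)]))"
      unfolding Pull sum.distrib[symmetric] wt_snoc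
      by (rule sum.cong) (simp_all add: step_pull t0 algebra_simps)
    also have "\<dots> \<le> \<beta> * (\<Sum>j\<in>J. w j * wt (th j) (h @ [(i,True)])) + \<beta> * (\<Sum>j\<in>J. w j * wt (th j) (h @ [(i,False)]))"
      using IT IF by linarith
    also have "\<dots> = \<beta> * (\<Sum>j\<in>J. w j * wt (th j) h)"
      unfolding distrib_left[symmetric] sum.distrib[symmetric] wt_snoc
      by (simp add: algebra_simps)
    finally show ?thesis .
  qed
  have int: "integrable (measure_pmf (A h)) (\<lambda>a. w j * wt (th j) h * stepF (th j) A (Gs j) t h a)" for j
    by (intro Bochner_Integration.integrable_mult_right step_int th)
  have "(\<Sum>j\<in>J. w j * wt (th j) h * stop_prob (th j) A (Gs j) (Suc t) h)
      = measure_pmf.expectation (A h) (\<lambda>a. \<Sum>j\<in>J. w j * wt (th j) h * stepF (th j) A (Gs j) t h a)"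
    unfolding sp_Suc by (subst Bochner_Integration.integral_sum[OF int]) simp
  also have "\<dots> \<le> measure_pmf.expectation (A h) (\<lambda>a. \<beta> * (\<Sum>j\<in>J. w j * wt (th j) h))"
    using pt by (intro integral_mono Bochner_Integration.integrable_sum int) auto
  also have "\<dots> = \<beta> * (\<Sum>j\<in>J. w j * wt (th j) h)" by simp
  finally show ?case .
qed




definition cnt :: "(nat \<times> bool) list \<Rightarrow> nat \<Rightarrow> bool \<Rightarrow> nat" where
  "cnt h i r = count_list h (i,r)"

definition C0 :: "nat \<Rightarrow> (nat \<times> bool) list \<Rightarrow> real" where
  "C0 n h = prod_list (map (\<lambda>(i,r). if i < n then 1 else if r then 0 else 1) h)"

lemma C0_nonneg: "0 \<le> C0 n h"
  unfolding C0_def by (induction h) auto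

lemma wt_formula:
  assumes z: "\<And>i. n \<le> i \<Longrightarrow> \<theta> i = 0"
  shows "wt \<theta> h = C0 n h * (\<Prod>i<n. \<theta> i ^ cnt h i True * (1 - \<theta> i) ^ cnt h i False)"
proof (induction h)
  case Nil then show ?case by (simp add: wt_def C0_def cnt_def)
next
  case (Cons x h)
  obtain j r where x: "x = (j,r)" by (cases x)
  let ?c = "if r then \<theta> j else 1 - \<theta> j"
  have wt: "wt \<theta> (x # h) = ?c * wt \<theta> h" by (simp add: wt_def x)
  show ?case
  proof (cases "j < n")
    case True
    have C: "C0 n (x # h) = C0 n h" using True by (simp add: C0_def x)
    have e: "\<theta> i ^ cnt (x # h) i True * (1 - \<theta> i) ^ cnt (x # h) i False
        = (\<theta> i ^ cnt h i True * (1 - \<theta> i) ^ cnt h i False) * (if i = j then ?c else 1)" for i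
      by (cases r) (auto simp: cnt_def x)
    have "(\<Prod>i<n. \<theta> i ^ cnt (x # h) i True * (1 - \<theta> i) ^ cnt (x # h) i False)
        = (\<Prod>i<n. \<theta> i ^ cnt h i True * (1 - \<theta> i) ^ cnt h i False) * (\<Prod>i<n. (if i = j then ?c else 1))"
      unfolding e by (rule prod.distrib)
    also have "(\<Prod>i<n. (if i = j then ?c else 1)) = ?c" using True by (simp add: prod.delta')
    finally show ?thesis using wt C Cons.IH by simp
  next
    case False
    have C: "C0 n (x # h) = ?c * C0 n h" using False z[of j] by (simp add: C0_def x)
    have e: "cnt (x # h) i s = cnt h i s" if "i < n" for i s using that False by (auto simp: cnt_def x)
    show ?thesis using wt C Cons.IH e by simp
  qed
qed




lemma lin_aux:
  fixes X Y p :: real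
  assumes "p * Y \<le> X" "p * X \<le> X" "0 \<le> X"
  shows "(1/4 * X) * (1/2) + 3/4 * Y \<le> (1 - p/16) * (1/4 * X + 3/4 * Y)"
proof -
  have e: "(1 - p/16) * (1/4 * X + 3/4 * Y) = X/4 + 3/4*Y - (p*X)/64 - 3*(p*Y)/64"
    by (simp add: field_simps)
  show ?thesis unfolding e using assms by linarith
qed

lemma arm_ineq:
  fixes u v :: real
  assumes v: "0 < v" "v \<le> u" and bL: "b \<le> L"
  shows "(1/4* u ^ a* v ^ b)* (1/2) + 3/4* v ^ a* u ^ b \<le> (1 - (v/u) ^ L/16)* (1/4* u ^ a* v ^ b + 3/4* v ^ a* u ^ b)"
proof -
  have u: "0 < u" using v by simp
  have r0: "0 \<le> v/u" "v/u \<le> 1" using v u by auto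
  have p1: "(v/u) ^ L \<le> 1" using r0 by (simp add: power_le_one)
  have p2: "(v/u) ^ L \<le> (v/u) ^ b" using r0 bL by (simp add: power_decreasing)
  have "(v/u) ^ b *  u ^ b = v ^ b" using u by (simp add: power_divide)
  have "(v/u) ^ L *  (v ^ a* u ^ b) \<le> (v/u) ^ b *  (v ^ a* u ^ b)"
    using p2 u v by (intro mult_right_mono) auto
  also have "\<dots> = v ^ a *  v ^ b" using u by (simp add: power_divide)
  also have "\<dots> \<le> u ^ a *  v ^ b" using v by (intro mult_right_mono power_mono) auto
  finally have A: "(v/u) ^ L *  (v ^ a* u ^ b) \<le> u ^ a *  v ^ b" .
  have B: "(v/u) ^ L *  (u ^ a* v ^ b) \<le> u ^ a *  v ^ b"
    using p1 u v by (metis mult_left_le_one_le mult_nonneg_nonneg zero_le_power less_imp_le zero_le_divide_iff)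
  show ?thesis using lin_aux[OF A B] u v by (simp add: mult.commute mult.left_commute)
qed




lemma eta_val: "eta = 1/10000"
  unfolding eta_def by (simp add: powr_minus powr_realpow)

definition "uu = 1/2 + eta"
definition "vv = 1/2 - eta"

definition thH :: "nat \<Rightarrow> nat set \<Rightarrow> nat \<Rightarrow> real" where
  "thH n H i = (if i < n then if i \<in> H then uu else vv else 0)"

definition piw :: "nat \<Rightarrow> nat set \<Rightarrow> real" where
  "piw n H = (1/4) ^ card H * (3/4) ^ (n - card H)"

definition "ff h i = 1/4 * uu ^ cnt h i True * vv ^ cnt h i False"
definition "gg h i = 3/4 * vv ^ cnt h i True * uu ^ cnt h i False"

lemma uv: "uu = 5001/10000" "vv = 4999/10000"
  by (simp_all add: uu_def vv_def eta_val)

lemma thH_01: "0 \<le> thH n H i \<and> thH n H i \<le> 1"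
  by (simp add: thH_def uv)

lemma piw_nonneg: "0 \<le> piw n H" by (simp add: piw_def)

lemma prod_form:
  assumes H: "H \<subseteq> {..<n}"
  shows "piw n H * wt (thH n H) h = C0 n h * (\<Prod>i\<in>H. ff h i) * (\<Prod>i\<in>{..<n}-H. gg h i)"
proof -
  have fH: "finite H" using H finite_subset by blast
  have z: "\<And>i. n \<le> i \<Longrightarrow> thH n H i = 0" by (simp add: thH_def)
  let ?F = "\<lambda>i. thH n H i ^ cnt h i True * (1 - thH n H i) ^ cnt h i False"
  have "(\<Prod>i<n. ?F i) = (\<Prod>i\<in>{..<n}-H. ?F i) * (\<Prod>i\<in>H. ?F i)"
    using H by (intro prod.subset_diff) auto
  also have "(\<Prod>i\<in>H. ?F i) = (\<Prod>i\<in>H. uu ^ cnt h i True * vv ^ cnt h i False)"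
    using H by (intro prod.cong) (auto simp: thH_def uv)
  also have "(\<Prod>i\<in>{..<n}-H. ?F i) = (\<Prod>i\<in>{..<n}-H. vv ^ cnt h i True * uu ^ cnt h i False)"
    by (intro prod.cong) (auto simp: thH_def uv)
  finally have W: "wt (thH n H) h = C0 n h * ((\<Prod>i\<in>{..<n}-H. vv ^ cnt h i True * uu ^ cnt h i False) *
      (\<Prod>i\<in>H. uu ^ cnt h i True * vv ^ cnt h i False))"
    using wt_formula[OF z] by simp
  have cH: "card ({..<n} - H) = n - card H" using H fH by (simp add: card_Diff_subset)
  have P: "piw n H = (\<Prod>i\<in>H. 1/4) * (\<Prod>i\<in>{..<n}-H. 3/4)"
    unfolding piw_def using cH by simp
  have "(\<Prod>i\<in>H. ff h i) = (\<Prod>i\<in>H. 1/4) * (\<Prod>i\<in>H. uu ^ cnt h i True * vv ^ cnt h i False)"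
    unfolding ff_def prod.distrib[symmetric] by (simp add: mult.assoc)
  moreover have "(\<Prod>i\<in>{..<n}-H. gg h i) = (\<Prod>i\<in>{..<n}-H. 3/4) * (\<Prod>i\<in>{..<n}-H. vv ^ cnt h i True * uu ^ cnt h i False)"
    unfolding gg_def prod.distrib[symmetric] by (simp add: mult.assoc)
  ultimately show ?thesis unfolding W P by (simp add: ac_simps)
qed

lemma sum_form:
  "(\<Sum>H\<in>Pow {..<n}. piw n H * wt (thH n H) h * (\<Prod>i\<in>H. c i)) = C0 n h * (\<Prod>i<n. ff h i * c i + gg h i)"
proof -
  have "(\<Sum>H\<in>Pow {..<n}. piw n H * wt (thH n H) h * (\<Prod>i\<in>H. c i))
      = (\<Sum>H\<in>Pow {..<n}. C0 n h * ((\<Prod>i\<in>H. ff h i * c i) * (\<Prod>i\<in>{..<n}-H. gg h i)))"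
    by (intro sum.cong refl) (simp add: prod_form prod.distrib ac_simps)
  also have "\<dots> = C0 n h * (\<Prod>i<n. ff h i * c i + gg h i)"
    by (simp add: prod_add sum_distrib_left)
  finally show ?thesis .
qed

lemma sum_form1:
  "(\<Sum>H\<in>Pow {..<n}. piw n H * wt (thH n H) h) = C0 n h * (\<Prod>i<n. ff h i + gg h i)"
  using sum_form[of n h "\<lambda>_. 1"] by simp




lemma top_aux:
  fixes zs :: "real list"
  shows "sorted_wrt (\<ge>) zs \<Longrightarrow> Y \<subseteq># mset zs \<Longrightarrow> size Y = K \<Longrightarrow> sum_mset Y \<le> sum_list (take K zs)"
proof (induction zs arbitrary: Y K)
  case Nil then show ?case by simp
next
  case (Cons z zs)
  show ?case
  proof (cases K)
    case 0 then show ?thesis using Cons by simp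
  next
    case (Suc k)
    show ?thesis
    proof (cases "z \<in># Y")
      case True
      define Y' where "Y' = Y - {#z#}"
      have Y: "Y = add_mset z Y'" using True Y'_def by simp
      have "Y' \<subseteq># mset zs" using Cons.prems(2) unfolding Y by (simp add: mset_subset_eq_add_mset_cancel)
      moreover have "size Y' = k" using Cons.prems(3) Suc Y by simp
      moreover have "sorted_wrt (\<ge>) zs" using Cons.prems(1) by simp
      ultimately have "sum_mset Y' \<le> sum_list (take k zs)" using Cons.IH by blast
      then show ?thesis using Y Suc by simp
    next
      case False
      have "count Y a \<le> count (mset zs) a" for a
      proof (cases "a = z")
        case True then have "count Y a = 0" using False by (simp add: not_in_iff)
        then show ?thesis by simp
      next
        case F: False
        have "count Y a \<le> count (mset (z # zs)) a" using Cons.prems(2) by (simp add: subseteq_mset_def)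
        then show ?thesis using F by simp
      qed
      then have "Y \<subseteq># mset zs" by (simp add: subseteq_mset_def)
      hence s1: "sum_mset Y \<le> sum_list (take K zs)" using Cons.IH Cons.prems by simp
      have "size Y \<le> length zs" using \<open>Y \<subseteq># mset zs\<close> by (metis size_mset size_mset_mono)
      hence kl: "k < length zs" using Cons.prems(3) Suc by simp
      have "take K zs = take k zs @ [zs ! k]" using kl Suc by (simp add: take_Suc_conv_app_nth)
      moreover have "zs ! k \<le> z" using Cons.prems(1) kl by simp
      ultimately show ?thesis using s1 Suc by simp
    qed
  qed
qed

lemma top_sum_ge:
  assumes "T \<subseteq> {..<n}" "card T = K"
  shows "sum \<theta> T \<le> top_sum \<theta> n K"
proof -
  let ?zs = "rev (sort (map \<theta> [0..<n]))"
  have s: "sorted_wrt (\<ge>) ?zs" by (simp add: sorted_wrt_rev)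
  have fT: "finite T" using assms(1) finite_subset by blast
  have "image_mset \<theta> (mset_set T) \<subseteq># image_mset \<theta> (mset_set {..<n})"
    using assms(1) fT by (intro image_mset_subseteq_mono) simp
  moreover have "mset ?zs = image_mset \<theta> (mset_set {..<n})" by (simp add: atLeast0LessThan)
  ultimately have "image_mset \<theta> (mset_set T) \<subseteq># mset ?zs" by simp
  moreover have "size (image_mset \<theta> (mset_set T)) = K" using assms by simp
  ultimately show ?thesis unfolding top_sum_def sum_unfold_sum_mset[of \<theta> T]
    using top_aux[OF s] by blast
qed




lemma sum_thH:
  assumes "X \<subseteq> {..<n}"
  shows "sum (thH n H) X = real (card (X \<inter> H)) * uu + real (card (X - H)) * vv"
proof -
  have fX: "finite X" using assms finite_subset by blast
  have "sum (thH n H) X = sum (thH n H) (X \<inter> H) + sum (thH n H) (X - H)"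
    using fX by (rule sum.Int_Diff)
  also have "sum (thH n H) (X \<inter> H) = sum (\<lambda>_. uu) (X \<inter> H)"
    using assms by (intro sum.cong) (auto simp: thH_def)
  also have "sum (thH n H) (X - H) = sum (\<lambda>_. vv) (X - H)"
    using assms by (intro sum.cong) (auto simp: thH_def)
  finally show ?thesis by simp
qed

lemma regret_card:
  assumes H: "H \<subseteq> {..<n}" and cH: "card H \<le> K" and Kn: "K \<le> n" and K1: "1 \<le> K"
    and E: "eps_top_K (thH n H) n K \<epsilon> S"
  shows "real (card (H - S)) * (uu - vv) \<le> real K * \<epsilon>"
proof -
  have S: "S \<subseteq> {..<n}" "card S = K" and r: "(top_sum (thH n H) n K - sum (thH n H) S) / real K \<le> \<epsilon>"
    using E by (auto simp: eps_top_K_def regret_def)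
  have fH: "finite H" using H finite_subset by blast
  have fS: "finite S" using S finite_subset by blast
  have "K - card H \<le> card ({..<n} - H)" using H fH Kn by (simp add: card_Diff_subset)
  then obtain B where B: "B \<subseteq> {..<n} - H" "card B = K - card H" "finite B"
    by (rule obtain_subset_with_card_n)
  let ?T = "H \<union> B"
  have T: "?T \<subseteq> {..<n}" using B H by auto
  have cT: "card ?T = K" using B fH cH by (subst card_Un_disjoint) auto
  have "?T \<inter> H = H" "?T - H = B" using B by auto
  then have sT: "sum (thH n H) ?T = real (card H) * uu + real (K - card H) * vv"
    using sum_thH[OF T] B by simp
  have top: "sum (thH n H) ?T \<le> top_sum (thH n H) n K" using top_sum_ge[OF T cT] .
  have cS: "card (S - H) = K - card (S \<inter> H)" using S fS
    by (metis card_Diff_subset_Int finite_Int)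
  have sS: "sum (thH n H) S = real (card (S \<inter> H)) * uu + real (K - card (S \<inter> H)) * vv"
    using sum_thH[OF S(1)] cS by simp
  have c1: "card (S \<inter> H) \<le> card H" using fH by (simp add: card_mono)
  have c2: "card (H - S) = card H - card (S \<inter> H)" using fH
    by (metis card_Diff_subset_Int finite_Int inf_commute)
  have "top_sum (thH n H) n K - sum (thH n H) S \<le> real K * \<epsilon>"
    using r K1 by (simp add: divide_le_eq mult.commute)
  moreover have "real (card (H - S)) * (uu - vv) = sum (thH n H) ?T - sum (thH n H) S"
    unfolding sT sS c2 using c1 cH by (simp add: of_nat_diff algebra_simps)
  ultimately show ?thesis using top by linarith
qed




lemma cnt_sum: "finite I \<Longrightarrow> (\<Sum>i\<in>I. cnt h i True + cnt h i False) \<le> length h"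
proof (induction h)
  case Nil then show ?case by (simp add: cnt_def)
next
  case (Cons x h)
  obtain j r where x: "x = (j,r)" by (cases x)
  have e: "cnt (x#h) i True + cnt (x#h) i False = (cnt h i True + cnt h i False) + (if i = j then 1 else 0)" for i
    by (cases r) (auto simp: cnt_def x)
  have "(\<Sum>i\<in>I. cnt (x#h) i True + cnt (x#h) i False) = (\<Sum>i\<in>I. cnt h i True + cnt h i False) + (\<Sum>i\<in>I. (if i = j then 1 else 0))"
    unfolding e by (rule sum.distrib)
  also have "(\<Sum>i\<in>I. (if i = j then 1 else 0)) \<le> (1::nat)" using Cons.prems by (simp add: sum.delta')
  finally show ?case using Cons by simp
qed

lemma count_Q:
  assumes n: "n = 2*K" and S: "S \<subseteq> {..<n}" "card S = K"
    and len: "length h \<le> Nmax" and NL: "2*Nmax \<le> K*(L+1)"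
  shows "K \<le> 2 * card {i\<in>{..<n}-S. cnt h i True + cnt h i False \<le> L}"
proof -
  let ?N = "\<lambda>i. cnt h i True + cnt h i False"
  let ?Q = "{i\<in>{..<n}-S. ?N i \<le> L}"
  let ?R = "{i\<in>{..<n}-S. L < ?N i}"
  have fS: "finite S" using S finite_subset by blast
  have cD: "card ({..<n} - S) = K" using S fS n by (simp add: card_Diff_subset)
  have QR: "?Q \<union> ?R = {..<n} - S" "?Q \<inter> ?R = {}" by auto
  have cQR: "card ?Q + card ?R = K" using card_Un_disjoint[of ?Q ?R] QR cD by simp
  have "card ?R * (L+1) = (\<Sum>i\<in>?R. L+1)" by simp
  also have "\<dots> \<le> (\<Sum>i\<in>?R. ?N i)" by (intro sum_mono) auto
  also have "\<dots> \<le> (\<Sum>i\<in>{..<n}. ?N i)" by (intro sum_mono2) auto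
  also have "\<dots> \<le> length h" by (rule cnt_sum) simp
  finally have "card ?R * (L+1) \<le> Nmax" using len by linarith
  then have "2 * card ?R * (L+1) \<le> K * (L+1)" using NL by linarith
  then have "2 * card ?R \<le> K" using mult_le_cancel2[of "2*card ?R" "L+1" K] by simp
  then show ?thesis using cQR by linarith
qed




definition "Gp n K \<epsilon> H S \<longleftrightarrow> eps_top_K (thH n H) n K \<epsilon> S \<and> card H \<le> K"

lemma ff_gg_nonneg: "0 \<le> ff h i" "0 \<le> gg h i"
  by (simp_all add: ff_def gg_def uv)

lemma prod_half: "finite H \<Longrightarrow> (\<Prod>i\<in>H. (if i \<in> S then 1 else 1/2::real)) = (1/2) ^ card (H - S)"
proof -
  assume f: "finite H"
  have "(\<Prod>i\<in>H. (if i \<in> S then 1 else 1/2::real)) = (\<Prod>i\<in>H \<inter> {x. x\<in>S}. 1) * (\<Prod>i\<in>H \<inter> - {x. x \<in> S}. 1/2)"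
    using f by (rule prod.If_cases)
  also have "H \<inter> - {x. x \<in> S} = H - S" by auto
  finally show ?thesis by simp
qed

lemma key:
  assumes n: "n = 2*K" and K1: "1 \<le> K"
    and len: "length h \<le> Nmax" and NL: "2*Nmax \<le> K*(L+1)"
  shows "(\<Sum>H\<in>Pow {..<n}. piw n H * wt (thH n H) h * (if Gp n K \<epsilon> H S then 1 else 0))
     \<le> (2 powr (real K * \<epsilon> / (uu - vv)) * exp (- ((vv/uu)^L/16) * real K / 2)) * (\<Sum>H\<in>Pow {..<n}. piw n H * wt (thH n H) h)"
    (is "?L \<le> ?\<beta> * ?R")
proof -
  have wnn: "0 \<le> piw n H * wt (thH n H) h" for H
    using piw_nonneg wt_nonneg[of "thH n H"] thH_01 by (simp add: mult_nonneg_nonneg)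
  have Rnn: "0 \<le> ?R" using wnn by (simp add: sum_nonneg)
  have bnn: "0 \<le> ?\<beta>" by simp
  show ?thesis
  proof (cases "S \<subseteq> {..<n} \<and> card S = K")
    case False
    then have "\<not> Gp n K \<epsilon> H S" for H by (auto simp: Gp_def eps_top_K_def)
    then show ?thesis using Rnn bnn by simp
  next
    case True
    then have S: "S \<subseteq> {..<n}" "card S = K" by auto
    define d where "d = real K * \<epsilon> / (uu - vv)"
    define c where "c = (\<lambda>i. if i \<in> S then 1 else 1/2::real)"
    define \<gamma> where "\<gamma> = (vv/uu)^L/16"
    define Q where "Q = {i\<in>{..<n}-S. cnt h i True + cnt h i False \<le> L}"
    have uvpos: "0 < uu - vv" by (simp add: uv)
    have ind: "(if Gp n K \<epsilon> H S then 1 else 0) \<le> 2 powr d * (\<Prod>i\<in>H. c i)" if H: "H \<in> Pow {..<n}" for H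
    proof (cases "Gp n K \<epsilon> H S")
      case True
      have Hs: "H \<subseteq> {..<n}" using H by auto
      have fH: "finite H" using Hs finite_subset by blast
      have "real (card (H - S)) * (uu - vv) \<le> real K * \<epsilon>"
        using True regret_card[OF Hs _ _ K1] n by (auto simp: Gp_def)
      then have cd: "real (card (H - S)) \<le> d" unfolding d_def using uvpos by (simp add: pos_le_divide_eq)
      have "(\<Prod>i\<in>H. c i) = (1/2) ^ card (H - S)" unfolding c_def using prod_half[OF fH] .
      also have "\<dots> = 2 powr (- real (card (H - S)))"
        by (simp add: powr_minus powr_realpow power_one_over inverse_eq_divide)
      finally have "2 powr d * (\<Prod>i\<in>H. c i) = 2 powr (d + - real (card (H - S)))" by (simp only: powr_add)
      moreover have "1 \<le> 2 powr (d + - real (card (H - S)))" using cd by (intro ge_one_powr_ge_zero) auto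
      ultimately show ?thesis using True by simp
    next
      case False
      have "0 \<le> (\<Prod>i\<in>H. c i)" unfolding c_def by (intro prod_nonneg) auto
      then show ?thesis using False by simp
    qed
    have "?L \<le> (\<Sum>H\<in>Pow {..<n}. piw n H * wt (thH n H) h * (2 powr d * (\<Prod>i\<in>H. c i)))"
      using ind wnn by (intro sum_mono mult_left_mono) auto
    also have "\<dots> = 2 powr d * (\<Sum>H\<in>Pow {..<n}. piw n H * wt (thH n H) h * (\<Prod>i\<in>H. c i))"
      by (simp add: sum_distrib_left ac_simps)
    also have "\<dots> = 2 powr d * (C0 n h * (\<Prod>i<n. ff h i * c i + gg h i))"
      by (simp add: sum_form)
    also have "(\<Prod>i<n. ff h i * c i + gg h i) \<le> (\<Prod>i<n. (if i \<in> Q then 1 - \<gamma> else 1) * (ff h i + gg h i))"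
    proof (intro prod_mono conjI)
      fix i assume i: "i \<in> {..<n}"
      show "0 \<le> ff h i * c i + gg h i" using ff_gg_nonneg unfolding c_def by simp
      show "ff h i * c i + gg h i \<le> (if i \<in> Q then 1 - \<gamma> else 1) * (ff h i + gg h i)"
      proof (cases "i \<in> Q")
        case True
        then have "i \<notin> S" "cnt h i False \<le> L" unfolding Q_def by auto
        then show ?thesis using True arm_ineq[of vv uu "cnt h i False" L "cnt h i True"]
          unfolding c_def \<gamma>_def ff_def gg_def by (simp add: uv)
      next
        case False
        have "ff h i * c i \<le> ff h i * 1" using ff_gg_nonneg unfolding c_def by (intro mult_left_mono) auto
        then show ?thesis using False by simp
      qed
    qed
    also have "\<dots> = (1 - \<gamma>) ^ card Q * (\<Prod>i<n. ff h i + gg h i)"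
    proof -
      have "(\<Prod>i<n. (if i \<in> Q then 1 - \<gamma> else 1)) = (\<Prod>i\<in>{..<n} \<inter> {x. x \<in> Q}. 1 - \<gamma>) * (\<Prod>i\<in>{..<n} \<inter> - {x. x \<in> Q}. 1)"
        by (rule prod.If_cases) simp
      also have "{..<n} \<inter> {x. x \<in> Q} = Q" unfolding Q_def by auto
      finally show ?thesis by (simp add: prod.distrib)
    qed
    finally have L1: "?L \<le> 2 powr d * (C0 n h * ((1 - \<gamma>) ^ card Q * (\<Prod>i<n. ff h i + gg h i)))"
      using C0_nonneg by (simp add: mult_left_mono)
    have p1: "(vv/uu)^L \<le> 1" by (rule power_le_one) (simp_all add: uv)
    have g0: "0 \<le> \<gamma>" "\<gamma> \<le> 1" unfolding \<gamma>_def using p1 by (simp_all add: uv)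
    have "(1 - \<gamma>) ^ card Q \<le> exp (- \<gamma>) ^ card Q"
      using g0 by (intro power_mono) (use exp_ge_add_one_self[of "-\<gamma>"] in auto)
    also have "\<dots> = exp (- \<gamma> * real (card Q))" by (simp add: exp_of_nat_mult[symmetric] mult.commute)
    also have "\<dots> \<le> exp (- \<gamma> * real K / 2)"
    proof -
      have "real K \<le> 2 * real (card Q)" using count_Q[OF n S len NL] unfolding Q_def by linarith
      then have "\<gamma> * real K \<le> \<gamma> * (2 * real (card Q))" using g0 by (intro mult_left_mono) auto
      then show ?thesis by (simp add: ac_simps)
    qed
    finally have E: "(1 - \<gamma>) ^ card Q \<le> exp (- \<gamma> * real K / 2)" .
    have PP: "0 \<le> C0 n h * (\<Prod>i<n. ff h i + gg h i)"
      using C0_nonneg ff_gg_nonneg by (simp add: prod_nonneg)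
    have "?L \<le> 2 powr d * ((1 - \<gamma>) ^ card Q * (C0 n h * (\<Prod>i<n. ff h i + gg h i)))"
      using L1 by (simp add: ac_simps)
    also have "\<dots> \<le> 2 powr d * (exp (- \<gamma> * real K / 2) * (C0 n h * (\<Prod>i<n. ff h i + gg h i)))"
      using E PP by (intro mult_left_mono mult_right_mono) auto
    also have "\<dots> = ?\<beta> * ?R" unfolding sum_form1 d_def \<gamma>_def by (simp add: ac_simps)
    finally show ?thesis .
  qed
qed




lemma succ_bound:
  assumes th: "\<And>i. 0 \<le> \<theta> i \<and> \<theta> i \<le> 1"
    and s: "success_prob \<theta> A G \<ge> 0.9"
  shows "0.9 \<le> stop_prob \<theta> A G B [] + (1 - stop_prob \<theta> A (\<lambda>_. True) B [])"
proof -
  let ?R = "stop_prob \<theta> A G B [] + (1 - stop_prob \<theta> A (\<lambda>_. True) B [])"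
  have "stop_prob \<theta> A G t [] \<le> ?R" for t
  proof (cases "t \<le> B")
    case True
    then show ?thesis using sp_mono_t[where \<theta>=\<theta>, OF th True, where A=A and G=G and h="[]"] sp_bounds[where \<theta>=\<theta>, OF th, of A "\<lambda>_. True" B "[]"] by linarith
  next
    case False
    then have "B \<le> t" by simp
    from sp_tail[where \<theta>=\<theta>, OF th _ this, where G=G and G'="\<lambda>_. True" and A=A and h="[]"] show ?thesis
      using sp_bounds[where \<theta>=\<theta>, OF th, of A "\<lambda>_. True" t "[]"] by simp
  qed
  then have "success_prob \<theta> A G \<le> ennreal ?R"
    unfolding success_prob_def by (intro SUP_least ennreal_leI) auto
  moreover have "(0.9::ennreal) = ennreal 0.9"
    by (metis divide_ennreal ennreal_numeral zero_le_numeral zero_less_numeral)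
  ultimately have "ennreal 0.9 \<le> ennreal ?R" using s by (metis order_trans)
  moreover have "0 \<le> ?R" using sp_bounds[where \<theta>=\<theta>, OF th, of A G B "[]"] sp_bounds[where \<theta>=\<theta>, OF th, of A "\<lambda>_. True" B "[]"] by linarith
  ultimately show ?thesis by (simp add: ennreal_le_iff)
qed

lemma EN_bound:
  assumes th: "\<And>i. 0 \<le> \<theta> i \<and> \<theta> i \<le> 1"
  shows "ennreal (real B * (1 - stop_prob \<theta> A (\<lambda>_. True) B [])) \<le> expected_pulls \<theta> A"
proof -
  let ?c = "1 - stop_prob \<theta> A (\<lambda>_. True) B []"
  have c0: "0 \<le> ?c" using sp_bounds[where \<theta>=\<theta>, OF th] by (simp)
  have "ennreal (real B * ?c) = (\<Sum>t<B. ennreal ?c)" using c0 by (simp add: ennreal_mult' ennreal_of_nat_eq_real_of_nat)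
  also have "\<dots> \<le> (\<Sum>t<B. ennreal (1 - stop_prob \<theta> A (\<lambda>_. True) (Suc t) []))"
  proof (intro sum_mono ennreal_leI)
    fix t assume "t \<in> {..<B}"
    then have "Suc t \<le> B" by simp
    then show "?c \<le> 1 - stop_prob \<theta> A (\<lambda>_. True) (Suc t) []" using sp_mono_t[where \<theta>=\<theta>, OF th] by smt
  qed
  also have "\<dots> \<le> expected_pulls \<theta> A" unfolding expected_pulls_def
    by (intro sum_le_suminf) auto
  finally show ?thesis .
qed

lemma sum_piw: "(\<Sum>H\<in>Pow {..<n}. piw n H) = 1"
  using sum_form1[of n "[]"] by (simp add: wt_def C0_def ff_def gg_def cnt_def)

lemma sum_piw_big: "(\<Sum>H\<in>Pow {..<n}. piw n H * (if K < card H then 1 else 0)) \<le> (5/4)^n / 2^K"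
proof -
  have "(\<Sum>H\<in>Pow {..<n}. piw n H * (if K < card H then 1 else 0)) \<le> (\<Sum>H\<in>Pow {..<n}. piw n H * ((\<Prod>i\<in>H. 2) / 2^K))"
  proof (intro sum_mono mult_left_mono piw_nonneg)
    fix H assume "H \<in> Pow {..<n}"
    show "(if K < card H then 1 else 0) \<le> (\<Prod>i\<in>H. 2::real) / 2^K"
    proof (cases "K < card H")
      case True
      then have "(2::real)^K \<le> 2^card H" by (intro power_increasing) auto
      then show ?thesis using True by simp
    qed simp
  qed
  also have "\<dots> = (\<Sum>H\<in>Pow {..<n}. piw n H * wt (thH n H) [] * (\<Prod>i\<in>H. 2)) / 2^K"
    by (simp add: sum_divide_distrib wt_def)
  also have "\<dots> = (5/4)^n / 2^K" unfolding sum_form by (simp add: wt_def C0_def ff_def gg_def cnt_def)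
  finally show ?thesis .
qed




lemma num1:
  assumes l: "0 \<le> ll" and L: "real L \<le> 500 * ll"
  shows "exp (- ll / 2) \<le> (vv/uu)^L"
proof -
  have q: "uu / vv = 5001/4999" by (simp add: uv)
  have l0: "0 \<le> ln (uu/vv)" unfolding q by simp
  have l1: "ln (uu/vv) \<le> 1/1000"
  proof -
    have "ln (uu/vv) \<le> uu/vv - 1" by (rule ln_le_minus_one) (simp add: q)
    also have "\<dots> \<le> 1/1000" unfolding q by simp
    finally show ?thesis .
  qed
  have "real L * ln (uu/vv) \<le> 500 * ll * (1/1000)"
    using L l0 l1 l by (intro mult_mono) auto
  moreover have e: "ln (vv/uu) = - ln (uu/vv)"
    using ln_inverse[of "uu/vv"] by (simp add: uv)
  ultimately have a: "- ll / 2 \<le> real L * ln (vv/uu)"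
    unfolding e by simp
  have "exp (- ll / 2) \<le> exp (real L * ln (vv/uu))" using a by simp
  also have "\<dots> = exp (ln (vv/uu)) ^ L" by (rule exp_of_nat_mult)
  also have "\<dots> = (vv/uu)^L" by (simp add: uv)
  finally show ?thesis .
qed

lemma num2:
  assumes K1: "1 \<le> K" and e1: "100000 / real K \<le> \<epsilon>" and e2: "\<epsilon> \<le> 1/10^12"
    and L: "real L \<le> 500 * ln (1/\<epsilon>)"
  shows "2 powr (real K * \<epsilon> / (uu - vv)) * exp (- ((vv/uu)^L/16) * real K / 2) \<le> 1/2"
proof -
  have Kp: "0 < real K" using K1 by simp
  have ep: "0 < \<epsilon>" using e1 Kp by (smt (verit) divide_pos_pos)
  define ll where "ll = ln (1/\<epsilon>)"
  have l0: "0 \<le> ll" unfolding ll_def using ep e2 by simp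
  define s where "s = exp (- ll / 2)"
  have sp: "0 < s" unfolding s_def by simp
  have ss: "s * s = \<epsilon>"
  proof -
    have "s * s = exp (- ll)" unfolding s_def by (simp add: exp_add[symmetric])
    also have "\<dots> = \<epsilon>" unfolding ll_def using ep by (simp add: ln_div)
    finally show ?thesis .
  qed
  have sl: "s \<le> (vv/uu)^L" unfolding s_def using num1[OF l0] L ll_def by simp
  have s6: "s \<le> 1/1000000"
  proof (rule ccontr)
    assume "\<not> s \<le> 1/1000000"
    then have "1/1000000 * (1/1000000) < s * s" by (intro mult_strict_mono) auto
    then show False using ss e2 by simp
  qed
  have sK: "300 \<le> s * real K"
  proof (rule ccontr)
    assume "\<not> 300 \<le> s * real K"
    then have 1: "(s * real K) * (s * real K) < 300 * 300" using sp Kp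
      by (intro mult_strict_mono) auto
    have 2: "(s * real K) * (s * real K) = \<epsilon> * (real K * real K)"
      using ss by (simp add: algebra_simps)
    have 3: "100000 \<le> \<epsilon> * real K" using e1 Kp by (simp add: divide_le_eq mult.commute)
    have 4: "\<epsilon> * real K * 1 \<le> \<epsilon> * real K * real K" using ep Kp K1 by (intro mult_left_mono) auto
    show False using 1 2 3 4 by (simp add: mult.assoc)
  qed
  have uv5: "uu - vv = 1/5000" by (simp add: uv)
  have "2 powr (real K * \<epsilon> / (uu - vv)) = exp (ln 2 * (5000 * real K * \<epsilon>))"
    unfolding powr_def uv5 by (simp add: algebra_simps)
  also have "\<dots> \<le> exp (5000 * real K * \<epsilon>)"
    using ln_2_less_1 ep Kp by (intro exp_mono) (simp add: mult_left_le_one_le)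
  finally have A: "2 powr (real K * \<epsilon> / (uu - vv)) \<le> exp (5000 * real K * \<epsilon>)" .
  have B: "exp (- ((vv/uu)^L/16) * real K / 2) \<le> exp (- (s/16) * real K / 2)"
    using sl Kp by (intro exp_mono) (simp add: divide_right_mono mult_right_mono)
  have C: "5000 * real K * \<epsilon> \<le> s * real K / 64"
  proof -
    have "5000 * \<epsilon> = 5000 * s * s" using ss by simp
    also have "\<dots> \<le> 5000 * (1/1000000) * s" using s6 sp by (intro mult_right_mono) auto
    also have "\<dots> \<le> s / 64" using sp by simp
    finally show ?thesis using Kp by (simp add: mult_right_mono mult.commute mult.left_commute)
  qed
  have "2 powr (real K * \<epsilon> / (uu - vv)) * exp (- ((vv/uu)^L/16) * real K / 2)
     \<le> exp (5000 * real K * \<epsilon>) * exp (- (s/16) * real K / 2)"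
    using A B by (intro mult_mono) auto
  also have "\<dots> = exp (5000 * real K * \<epsilon> - s * real K / 32)" by (simp add: exp_add[symmetric])
  also have "\<dots> \<le> exp (-1)" using C sK by simp
  also have "\<dots> \<le> 1/2"
  proof -
    have "2 \<le> exp (1::real)" using exp_ge_add_one_self[of 1] by simp
    then show ?thesis by (simp add: exp_minus field_simps)
  qed
  finally show ?thesis .
qed




lemma thH_family: "H \<subseteq> {..<n} \<Longrightarrow> thH n H \<in> family n"
  by (auto simp: family_def thH_def uu_def vv_def)

theorem theorem3:
  shows "\<exists>c0 c1 c2 :: real. c0 > 0 \<and> c1 > 0 \<and> c2 > 0 \<and>
    (\<forall>(K::nat) (\<epsilon>::real) (A::algorithm). K \<ge> 1 \<longrightarrow> c0 / real K \<le> \<epsilon> \<longrightarrow> \<epsilon> \<le> c1 \<longrightarrow>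
       (\<forall>\<theta>\<in>family (2*K). success_prob \<theta> A (eps_top_K \<theta> (2*K) K \<epsilon>) \<ge> 0.9) \<longrightarrow>
       (\<exists>\<theta>\<in>family (2*K).
          expected_pulls \<theta> A \<ge> ennreal (c2 * real (2*K) * ln (1 / \<epsilon>))))"
proof (rule exI[of _ 100000], rule exI[of _ "1/10^12"], rule exI[of _ 1], intro conjI, simp, simp, simp, intro allI impI)
  fix K :: nat and \<epsilon> :: real and A :: algorithm
  assume K1: "1 \<le> K" and e1: "100000 / real K \<le> \<epsilon>" and e2: "\<epsilon> \<le> 1/10^12"
    and succ: "\<forall>\<theta>\<in>family (2*K). success_prob \<theta> A (eps_top_K \<theta> (2*K) K \<epsilon>) \<ge> 0.9"
  define n where "n = 2*K"
  define ll where "ll = ln (1/\<epsilon>)"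
  define X where "X = 1 * real (2*K) * ln (1 / \<epsilon>)"
  have Kp: "0 < real K" using K1 by simp
  have ep: "0 < \<epsilon>" using e1 Kp by (smt (verit) divide_pos_pos)
  have lp: "0 < ll" unfolding ll_def using ep e2 by simp
  define L where "L = nat \<lfloor>500 * ll\<rfloor>"
  have L1: "real L \<le> 500 * ll" unfolding L_def using lp by linarith
  have L2: "500 * ll < real L + 1" unfolding L_def using lp by linarith
  define Nmax where "Nmax = K * (L+1) div 2"
  define B where "B = Suc Nmax"
  have NL: "2 * Nmax \<le> K * (L+1)" unfolding Nmax_def by simp
  have BL: "real K * (real L + 1) \<le> 2 * real B"
  proof -
    have "K * (L+1) \<le> 2 * B" unfolding B_def Nmax_def by simp
    then have "real (K * (L+1)) \<le> real (2 * B)" by (simp only: of_nat_le_iff)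
    then show ?thesis by (simp add: algebra_simps)
  qed
  show "\<exists>\<theta>\<in>family (2*K). expected_pulls \<theta> A \<ge> ennreal (1 * real (2*K) * ln (1 / \<epsilon>))"
  proof (rule ccontr)
    assume "\<not> ?thesis"
    then have EN: "\<And>\<theta>. \<theta> \<in> family n \<Longrightarrow> expected_pulls \<theta> A < ennreal X"
      unfolding n_def X_def by (auto simp: not_le)
    define \<beta> where "\<beta> = 2 powr (real K * \<epsilon> / (uu - vv)) * exp (- ((vv/uu)^L/16) * real K / 2)"
    have per: "0.9 \<le> stop_prob (thH n H) A (Gp n K \<epsilon> H) B [] + (if K < card H then 1 else 0) + X / real B"
      if H: "H \<in> Pow {..<n}" for H
    proof -
      have th: "\<And>i. 0 \<le> thH n H i \<and> thH n H i \<le> 1" by (rule thH_01)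
      have fam: "thH n H \<in> family n" using H thH_family by auto
      have a: "0.9 \<le> stop_prob (thH n H) A (eps_top_K (thH n H) n K \<epsilon>) B [] + (1 - stop_prob (thH n H) A (\<lambda>_. True) B [])"
      proof -
        have s1: "success_prob (thH n H) A (eps_top_K (thH n H) n K \<epsilon>) \<ge> 0.9"
          using succ fam unfolding n_def by blast
        show ?thesis by (rule succ_bound[OF th s1])
      qed
      have "ennreal (real B * (1 - stop_prob (thH n H) A (\<lambda>_. True) B [])) < ennreal X"
        using EN_bound[where \<theta>="thH n H" and B=B and A=A, OF th] EN[OF fam] by (rule le_less_trans)
      then have "real B * (1 - stop_prob (thH n H) A (\<lambda>_. True) B []) < X"
        using sp_bounds[where \<theta>="thH n H", OF th] by (subst (asm) ennreal_less_iff) auto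
      then have b: "1 - stop_prob (thH n H) A (\<lambda>_. True) B [] \<le> X / real B"
        unfolding B_def by (simp add: le_divide_eq mult.commute)
      have c: "stop_prob (thH n H) A (eps_top_K (thH n H) n K \<epsilon>) B [] \<le> stop_prob (thH n H) A (Gp n K \<epsilon> H) B [] + (if K < card H then 1 else 0)"
      proof (cases "K < card H")
        case True
        then show ?thesis using sp_bounds[where \<theta>="thH n H", OF th] by (smt (verit))
      next
        case False
        then have "Gp n K \<epsilon> H = eps_top_K (thH n H) n K \<epsilon>" by (auto simp: Gp_def fun_eq_iff)
        then show ?thesis by simp
      qed
      show ?thesis using a b c by linarith
    qed
    have mixr: "(\<Sum>H\<in>Pow {..<n}. piw n H * wt (thH n H) [] * stop_prob (thH n H) A (Gp n K \<epsilon> H) B [])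
        \<le> \<beta> * (\<Sum>H\<in>Pow {..<n}. piw n H * wt (thH n H) [])"
    proof (rule mix[where N=Nmax])
      show "finite (Pow {..<n})" by simp
      show "\<And>j i. 0 \<le> thH n j i \<and> thH n j i \<le> 1" by (rule thH_01)
      show "\<And>j. 0 \<le> piw n j" by (rule piw_nonneg)
      show "0 \<le> \<beta>" unfolding \<beta>_def by simp
      show "length [] + B \<le> Suc Nmax" unfolding B_def by simp
      fix h :: "(nat \<times> bool) list" and S assume "length h \<le> Nmax"
      then show "(\<Sum>H\<in>Pow {..<n}. piw n H * wt (thH n H) h * (if Gp n K \<epsilon> H S then 1 else 0))
          \<le> \<beta> * (\<Sum>H\<in>Pow {..<n}. piw n H * wt (thH n H) h)"
        unfolding \<beta>_def using key[OF n_def K1 _ NL] by blast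
    qed
    then have mixr': "(\<Sum>H\<in>Pow {..<n}. piw n H * stop_prob (thH n H) A (Gp n K \<epsilon> H) B []) \<le> \<beta>"
      using sum_piw[of n] by (simp add: wt_def)
    have "(\<Sum>H\<in>Pow {..<n}. piw n H * 0.9) = (\<Sum>H\<in>Pow {..<n}. piw n H) * (0.9::real)"
      by (rule sum_distrib_right[symmetric])
    then have "0.9 = (\<Sum>H\<in>Pow {..<n}. piw n H * 0.9)" using sum_piw[of n] by simp
    also have "\<dots> \<le> (\<Sum>H\<in>Pow {..<n}. piw n H * (stop_prob (thH n H) A (Gp n K \<epsilon> H) B [] + (if K < card H then 1 else 0) + X / real B))"
      using per piw_nonneg by (intro sum_mono mult_left_mono) auto
    also have "\<dots> = (\<Sum>H\<in>Pow {..<n}. piw n H * stop_prob (thH n H) A (Gp n K \<epsilon> H) B [])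
        + (\<Sum>H\<in>Pow {..<n}. piw n H * (if K < card H then 1 else 0)) + X / real B"
    proof -
      have "(\<Sum>H\<in>Pow {..<n}. piw n H * (X / real B)) = (\<Sum>H\<in>Pow {..<n}. piw n H) * (X / real B)"
        by (rule sum_distrib_right[symmetric])
      then have "(\<Sum>H\<in>Pow {..<n}. piw n H * (X / real B)) = X / real B" using sum_piw[of n] by simp
      then show ?thesis by (simp only: distrib_left sum.distrib)
    qed
    also have "\<dots> \<le> \<beta> + (5/4)^n / 2^K + X / real B"
      using mixr' sum_piw_big[of n K] by linarith
    finally have F: "0.9 \<le> \<beta> + (5/4)^n / 2^K + X / real B" .
    have b1: "\<beta> \<le> 1/2" unfolding \<beta>_def using num2[OF K1 e1 e2] L1 ll_def by simp
    have K10: "10 \<le> K"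
    proof -
      have "100000 / real K \<le> 1/10^12" using e1 e2 by linarith
      then have "100000 * 10^12 \<le> real K" using Kp by (simp add: divide_le_eq)
      then have "real (10::nat) \<le> real K" by simp
      then show ?thesis by (simp only: of_nat_le_iff)
    qed
    have b2: "(5/4)^n / 2^K \<le> (1/10::real)"
    proof -
      have "(5/4::real)^n / 2^K = (25/32)^K" unfolding n_def
        by (simp add: power_mult power_divide power_mult_distrib[symmetric])
      also have "\<dots> \<le> (25/32)^10" using K10 by (intro power_decreasing) auto
      also have "\<dots> \<le> 1/10" by (simp add: power_divide)
      finally show ?thesis .
    qed
    have b3: "X / real B \<le> 1/100"
    proof -
      have Bp: "0 < real B" unfolding B_def by simp
      have "X = 2 * real K * ll" unfolding X_def ll_def by simp
      have "X * 100 \<le> real B"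
      proof -
        have "X * 100 = 200 * real K * ll" unfolding X_def ll_def by simp
        also have "\<dots> \<le> real K * (real L + 1) / 2"
        proof -
          have "400 * ll \<le> real L + 1" using L2 lp by linarith
          then have "real K * (400 * ll) \<le> real K * (real L + 1)" using Kp by (intro mult_left_mono) auto
          then show ?thesis by simp
        qed
        also have "\<dots> \<le> real B" using BL by simp
        finally show ?thesis .
      qed
      then show ?thesis using Bp by (simp add: divide_le_eq)
    qed
    show False using F b1 b2 b3 by simp
  qed
qed


end
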